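(* Let $(W,\odot,\mathbb{1})$ be a monoid and let $(M,+,\mathbb{0},\otimes)$ be an $\omega$-bicontinuous (left) $W$-module. Then for every $W$-wgcl program $C$ and every postweighting $f\in\mathrm{Wt}=M^\Sigma$, $$\mathrm{wlp}[\![C]\!](f)=\mathrm{wp}[\![C]\!](f)+\mathrm{wlp}[\![C]\!](\mathbb{0}),$$ where $\mathbb{0}$ is the constant-$\mathbb{0}$ weighting.
   Context: A (left) module over a monoid $(W,\odot,\mathbb{1})$ is a commutative monoid $(M,+,\mathbb{0})$ with an action $\otimes\colon W\times M\to M$ such that $(v\odot w)\otimes a=v\otimes(w\otimes a)$, $v\otimes(a+b)=(v\otimes a)+(v\otimes b)$, $\mathbb{1}\otimes a=a$, $v\otimes\mathbb{0}=\mathbb{0}$. The natural order is $a\preceq b$ iff $\exists c\colon a+c=b$. $M$ is $\omega$-bicontinuous if $\preceq$ is a partial order, $M$ has a greatest element $\top$, every increasing $\omega$-chain has a supremum and every decreasing $\omega$-chain has an infimum, and addition (in each argument) and, for each fixed $w\in W$, the map $a\mapsto w\otimes a$ preserve both suprema of increasing $\omega$-chains and infima of decreasing $\omega$-chains. States, programs: $\Sigma$ is the set of states (maps from variables to values); expressions $E$ evaluate to $E(\sigma)$; guards $\varphi$ are predicates on states. $W$-wgcl programs: $C::= x:=E \mid C;C \mid \mathtt{if}(\varphi)\{C\}\mathtt{else}\{C\} \mid \{C\}\oplus\{C\} \mid \mathtt{weight}\ a\ (a\in W) \mid \mathtt{while}(\varphi)\{C\}$. Weightings $\mathrm{Wt}=M^\Sigma$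 with pointwise operations and order; $([\varphi]\cdot f)(\sigma)=f(\sigma)$ if $\sigma\models\varphi$ else $\mathbb{0}$; $f[x/E](\sigma)=f(\sigma[x\mapsto E(\sigma)])$. For $T\in\{\mathrm{wp},\mathrm{wlp}\}$: $T[\![x:=E]\!](f)=f[x/E]$; $T[\![C_1;C_2]\!](f)=T[\![C_1]\!](T[\![C_2]\!](f))$; $T[\![\mathtt{if}(\varphi)\{C_1\}\mathtt{else}\{C_2\}]\!](f)=[\varphi]\cdot T[\![C_1]\!](f)+[\neg\varphi]\cdot T[\![C_2]\!](f)$; $T[\![\{C_1\}\oplus\{C_2\}]\!](f)=T[\![C_1]\!](f)+T[\![C_2]\!](f)$; $T[\![\mathtt{weight}\ a]\!](f)=a\otimes f$; $T[\![\mathtt{while}(\varphi)\{C'\}]\!](f)$ is the least fixed point (for $T=\mathrm{wp}$), resp. greatest fixed point (for $T=\mathrm{wlp}$), w.r.t. $\preceq$ of $X\mapsto[\neg\varphi]\cdot f+[\varphi]\cdot T[\![C']\!](X)$. *)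

theory Defs
  imports Main
begin

definition is_module :: "('w::monoid_mult \<Rightarrow> 'm::comm_monoid_add \<Rightarrow> 'm) \<Rightarrow> bool" where
  "is_module act \<longleftrightarrow>
     (\<forall>v w a. act (v * w) a = act v (act w a)) \<and>
     (\<forall>v a b. act v (a + b) = act v a + act v b) \<and>
     (\<forall>a. act 1 a = a) \<and>
     (\<forall>v. act v 0 = 0)"

definition nat_le :: "'m::comm_monoid_add \<Rightarrow> 'm \<Rightarrow> bool" where
  "nat_le a b \<longleftrightarrow> (\<exists>c. a + c = b)"

definition is_sup :: "'m::comm_monoid_add set \<Rightarrow> 'm \<Rightarrow> bool" where
  "is_sup S s \<longleftrightarrow> (\<forall>x\<in>S. nat_le x s) \<and> (\<forall>u. (\<forall>x\<in>S. nat_le x u) \<longrightarrow> nat_le s u)"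

definition is_inf :: "'m::comm_monoid_add set \<Rightarrow> 'm \<Rightarrow> bool" where
  "is_inf S s \<longleftrightarrow> (\<forall>x\<in>S. nat_le s x) \<and> (\<forall>u. (\<forall>x\<in>S. nat_le u x) \<longrightarrow> nat_le u s)"

definition inc_chain :: "(nat \<Rightarrow> 'm::comm_monoid_add) \<Rightarrow> bool" where
  "inc_chain c \<longleftrightarrow> (\<forall>n. nat_le (c n) (c (Suc n)))"

definition dec_chain :: "(nat \<Rightarrow> 'm::comm_monoid_add) \<Rightarrow> bool" where
  "dec_chain c \<longleftrightarrow> (\<forall>n. nat_le (c (Suc n)) (c n))"

definition bicont_map :: "('m::comm_monoid_add \<Rightarrow> 'm) \<Rightarrow> bool" where
  "bicont_map g \<longleftrightarrow>
     (\<forall>c s. inc_chain c \<longrightarrow> is_sup (range c) s \<longrightarrow> is_sup (range (g \<circ> c)) (g s)) \<and>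
     (\<forall>c s. dec_chain c \<longrightarrow> is_inf (range c) s \<longrightarrow> is_inf (range (g \<circ> c)) (g s))"

definition omega_bicontinuous_module ::
    "('w::monoid_mult \<Rightarrow> 'm::comm_monoid_add \<Rightarrow> 'm) \<Rightarrow> bool" where
  "omega_bicontinuous_module act \<longleftrightarrow>
     is_module act \<and>
     (\<forall>(a::'m) b. nat_le a b \<longrightarrow> nat_le b a \<longrightarrow> a = b) \<and>
     (\<exists>t. \<forall>a. nat_le a (t::'m)) \<and>
     (\<forall>c::nat \<Rightarrow> 'm. inc_chain c \<longrightarrow> (\<exists>s. is_sup (range c) s)) \<and>
     (\<forall>c::nat \<Rightarrow> 'm. dec_chain c \<longrightarrow> (\<exists>s. is_inf (range c) s)) \<and>
     (\<forall>a::'m. bicont_map (\<lambda>b. a + b)) \<and>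
     (\<forall>a::'m. bicont_map (\<lambda>b. b + a)) \<and>
     (\<forall>w. bicont_map (act w))"

type_synonym ('v, 'a) state = "'v \<Rightarrow> 'a"

datatype ('w, 'v, 'a) wgcl =
    Assign 'v "('v, 'a) state \<Rightarrow> 'a"
  | Seq "('w, 'v, 'a) wgcl" "('w, 'v, 'a) wgcl"
  | If "('v, 'a) state \<Rightarrow> bool" "('w, 'v, 'a) wgcl" "('w, 'v, 'a) wgcl"
  | Branch "('w, 'v, 'a) wgcl" "('w, 'v, 'a) wgcl"
  | Weight 'w
  | While "('v, 'a) state \<Rightarrow> bool" "('w, 'v, 'a) wgcl"

type_synonym ('v, 'a, 'm) weighting = "('v, 'a) state \<Rightarrow> 'm"

definition wt_le :: "('v, 'a, 'm::comm_monoid_add) weighting \<Rightarrow> ('v, 'a, 'm) weighting \<Rightarrow> bool" where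
  "wt_le f g \<longleftrightarrow> (\<forall>\<sigma>. nat_le (f \<sigma>) (g \<sigma>))"

definition wt_lfp :: "(('v, 'a, 'm::comm_monoid_add) weighting \<Rightarrow> ('v, 'a, 'm) weighting) \<Rightarrow> ('v, 'a, 'm) weighting" where
  "wt_lfp F = (THE X. F X = X \<and> (\<forall>Y. F Y = Y \<longrightarrow> wt_le X Y))"

definition wt_gfp :: "(('v, 'a, 'm::comm_monoid_add) weighting \<Rightarrow> ('v, 'a, 'm) weighting) \<Rightarrow> ('v, 'a, 'm) weighting" where
  "wt_gfp F = (THE X. F X = X \<and> (\<forall>Y. F Y = Y \<longrightarrow> wt_le Y X))"

definition guard_mult :: "(('v, 'a) state \<Rightarrow> bool) \<Rightarrow> ('v, 'a, 'm::zero) weighting \<Rightarrow> ('v, 'a, 'm) weighting" where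
  "guard_mult \<phi> f = (\<lambda>\<sigma>. if \<phi> \<sigma> then f \<sigma> else 0)"

fun wp :: "('w::monoid_mult \<Rightarrow> 'm::comm_monoid_add \<Rightarrow> 'm) \<Rightarrow> ('w, 'v, 'a) wgcl
           \<Rightarrow> ('v, 'a, 'm) weighting \<Rightarrow> ('v, 'a, 'm) weighting" where
  "wp act (Assign x E) f = (\<lambda>\<sigma>. f (\<sigma>(x := E \<sigma>)))"
| "wp act (Seq C1 C2) f = wp act C1 (wp act C2 f)"
| "wp act (If \<phi> C1 C2) f =
     (\<lambda>\<sigma>. guard_mult \<phi> (wp act C1 f) \<sigma> + guard_mult (\<lambda>s. \<not> \<phi> s) (wp act C2 f) \<sigma>)"
| "wp act (Branch C1 C2) f = (\<lambda>\<sigma>. wp act C1 f \<sigma> + wp act C2 f \<sigma>)"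
| "wp act (Weight w) f = (\<lambda>\<sigma>. act w (f \<sigma>))"
| "wp act (While \<phi> C) f =
     wt_lfp (\<lambda>X \<sigma>. guard_mult (\<lambda>s. \<not> \<phi> s) f \<sigma> + guard_mult \<phi> (wp act C X) \<sigma>)"

fun wlp :: "('w::monoid_mult \<Rightarrow> 'm::comm_monoid_add \<Rightarrow> 'm) \<Rightarrow> ('w, 'v, 'a) wgcl
           \<Rightarrow> ('v, 'a, 'm) weighting \<Rightarrow> ('v, 'a, 'm) weighting" where
  "wlp act (Assign x E) f = (\<lambda>\<sigma>. f (\<sigma>(x := E \<sigma>)))"
| "wlp act (Seq C1 C2) f = wlp act C1 (wlp act C2 f)"
| "wlp act (If \<phi> C1 C2) f =
     (\<lambda>\<sigma>. guard_mult \<phi> (wlp act C1 f) \<sigma> + guard_mult (\<lambda>s. \<not> \<phi> s) (wlp act C2 f) \<sigma>)"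
| "wlp act (Branch C1 C2) f = (\<lambda>\<sigma>. wlp act C1 f \<sigma> + wlp act C2 f \<sigma>)"
| "wlp act (Weight w) f = (\<lambda>\<sigma>. act w (f \<sigma>))"
| "wlp act (While \<phi> C) f =
     wt_gfp (\<lambda>X \<sigma>. guard_mult (\<lambda>s. \<not> \<phi> s) f \<sigma> + guard_mult \<phi> (wlp act C X) \<sigma>)"

end

theory Submission
  imports Defs
begin


lemma guard_sel: "guard_mult \<phi> (g::_\<Rightarrow>'m::comm_monoid_add) \<sigma> + guard_mult (\<lambda>s. \<not> \<phi> s) h \<sigma> = (if \<phi> \<sigma> then g \<sigma> else h \<sigma>)"
  by (simp add: guard_mult_def)

lemma guard_sel2: "guard_mult (\<lambda>s. \<not> \<phi> s) (f::_\<Rightarrow>'m::comm_monoid_add) \<sigma> + guard_mult \<phi> g \<sigma> = (if \<phi> \<sigma> then g \<sigma> else f \<sigma>)"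
  by (simp add: guard_mult_def)

definition winc :: "(nat \<Rightarrow> ('v,'a,'m::comm_monoid_add) weighting) \<Rightarrow> bool" where
  "winc F \<longleftrightarrow> (\<forall>n \<sigma>. nat_le (F n \<sigma>) (F (Suc n) \<sigma>))"
definition wdec :: "(nat \<Rightarrow> ('v,'a,'m::comm_monoid_add) weighting) \<Rightarrow> bool" where
  "wdec F \<longleftrightarrow> (\<forall>n \<sigma>. nat_le (F (Suc n) \<sigma>) (F n \<sigma>))"
definition wsup :: "(nat \<Rightarrow> ('v,'a,'m::comm_monoid_add) weighting) \<Rightarrow> ('v,'a,'m) weighting \<Rightarrow> bool" where
  "wsup F S \<longleftrightarrow> (\<forall>\<sigma>. is_sup (range (\<lambda>n. F n \<sigma>)) (S \<sigma>))"
definition winf :: "(nat \<Rightarrow> ('v,'a,'m::comm_monoid_add) weighting) \<Rightarrow> ('v,'a,'m) weighting \<Rightarrow> bool" where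
  "winf F S \<longleftrightarrow> (\<forall>\<sigma>. is_inf (range (\<lambda>n. F n \<sigma>)) (S \<sigma>))"
definition wmono :: "(('v,'a,'m::comm_monoid_add) weighting \<Rightarrow> ('v,'a,'m) weighting) \<Rightarrow> bool" where
  "wmono T \<longleftrightarrow> (\<forall>X Y. wt_le X Y \<longrightarrow> wt_le (T X) (T Y))"
definition wcont :: "(('v,'a,'m::comm_monoid_add) weighting \<Rightarrow> ('v,'a,'m) weighting) \<Rightarrow> bool" where
  "wcont T \<longleftrightarrow> (\<forall>F S. winc F \<longrightarrow> wsup F S \<longrightarrow> wsup (\<lambda>n. T (F n)) (T S))"
definition wcocont :: "(('v,'a,'m::comm_monoid_add) weighting \<Rightarrow> ('v,'a,'m) weighting) \<Rightarrow> bool" where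
  "wcocont T \<longleftrightarrow> (\<forall>F S. wdec F \<longrightarrow> winf F S \<longrightarrow> winf (\<lambda>n. T (F n)) (T S))"
definition wadd :: "(('v,'a,'m::comm_monoid_add) weighting \<Rightarrow> ('v,'a,'m) weighting) \<Rightarrow> bool" where
  "wadd T \<longleftrightarrow> (\<forall>X Y. T (\<lambda>\<sigma>. X \<sigma> + Y \<sigma>) = (\<lambda>\<sigma>. T X \<sigma> + T Y \<sigma>))"

definition jmono :: "(('v,'a,'m::comm_monoid_add) weighting \<Rightarrow> ('v,'a,'m) weighting \<Rightarrow> ('v,'a,'m) weighting) \<Rightarrow> bool" where
  "jmono H \<longleftrightarrow> (\<forall>f g X Y. wt_le f g \<longrightarrow> wt_le X Y \<longrightarrow> wt_le (H f X) (H g Y))"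
definition jcont :: "(('v,'a,'m::comm_monoid_add) weighting \<Rightarrow> ('v,'a,'m) weighting \<Rightarrow> ('v,'a,'m) weighting) \<Rightarrow> bool" where
  "jcont H \<longleftrightarrow> (\<forall>F Fs X Xs. winc F \<longrightarrow> wsup F Fs \<longrightarrow> winc X \<longrightarrow> wsup X Xs \<longrightarrow> wsup (\<lambda>n. H (F n) (X n)) (H Fs Xs))"
definition jcocont :: "(('v,'a,'m::comm_monoid_add) weighting \<Rightarrow> ('v,'a,'m) weighting \<Rightarrow> ('v,'a,'m) weighting) \<Rightarrow> bool" where
  "jcocont H \<longleftrightarrow> (\<forall>F Fs X Xs. wdec F \<longrightarrow> winf F Fs \<longrightarrow> wdec X \<longrightarrow> winf X Xs \<longrightarrow> winf (\<lambda>n. H (F n) (X n)) (H Fs Xs))"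

lemma nle_refl: "nat_le a a"
  unfolding nat_le_def by (rule exI[of _ 0]) simp

lemma nle_trans: "nat_le a b \<Longrightarrow> nat_le b c \<Longrightarrow> nat_le a c"
  unfolding nat_le_def by (metis add.assoc)

lemma nle_add: "nat_le a (a + c)"
  unfolding nat_le_def by blast

lemma nle_add2: "nat_le a (c + a)"
  unfolding nat_le_def by (metis add.commute)

lemma nle_zero: "nat_le 0 a"
  unfolding nat_le_def by simp

lemma nle_add_mono: "nat_le a b \<Longrightarrow> nat_le c d \<Longrightarrow> nat_le (a + c) (b + d)"
  unfolding nat_le_def by (metis add.assoc add.left_commute)

lemma is_sup_range: "is_sup (range c) s \<longleftrightarrow> (\<forall>n. nat_le (c n) s) \<and> (\<forall>u. (\<forall>n. nat_le (c n) u) \<longrightarrow> nat_le s u)"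
  unfolding is_sup_def by auto

lemma is_inf_range: "is_inf (range c) s \<longleftrightarrow> (\<forall>n. nat_le s (c n)) \<and> (\<forall>u. (\<forall>n. nat_le u (c n)) \<longrightarrow> nat_le u s)"
  unfolding is_inf_def by auto

lemma inc_chain_mono: assumes "inc_chain c" "m \<le> n" shows "nat_le (c m) (c n)"
  using assms(2)
proof (induction n rule: dec_induct)
  case base then show ?case by (rule nle_refl)
next
  case (step n) then show ?case using assms(1) nle_trans unfolding inc_chain_def by blast
qed

lemma dec_chain_mono: assumes "dec_chain c" "m \<le> n" shows "nat_le (c n) (c m)"
  using assms(2)
proof (induction n rule: dec_induct)
  case base then show ?case by (rule nle_refl)
next
  case (step n) then show ?case using assms(1) nle_trans unfolding dec_chain_def by blast
qed

lemma sup_const: "is_sup (range (\<lambda>n. c)) c"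
  unfolding is_sup_range by (simp add: nle_refl)

lemma inf_const: "is_inf (range (\<lambda>n. c)) c"
  unfolding is_inf_range by (simp add: nle_refl)

lemma sup_shift: assumes "inc_chain c" "is_sup (range (\<lambda>n. c (Suc n))) s" shows "is_sup (range c) s"
  unfolding is_sup_range
proof safe
  fix n show "nat_le (c n) s"
  proof (cases n)
    case 0 then show ?thesis using assms nle_trans unfolding is_sup_range inc_chain_def by blast
  next
    case (Suc k) then show ?thesis using assms unfolding is_sup_range by blast
  qed
next
  fix u assume "\<forall>n. nat_le (c n) u" then show "nat_le s u" using assms(2) unfolding is_sup_range by blast
qed

lemma inf_shift: assumes "dec_chain c" "is_inf (range (\<lambda>n. c (Suc n))) s" shows "is_inf (range c) s"
  unfolding is_inf_range
proof safe
  fix n show "nat_le s (c n)"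
  proof (cases n)
    case 0 then show ?thesis using assms nle_trans unfolding is_inf_range dec_chain_def by blast
  next
    case (Suc k) then show ?thesis using assms unfolding is_inf_range by blast
  qed
next
  fix u assume "\<forall>n. nat_le u (c n)" then show "nat_le u s" using assms(2) unfolding is_inf_range by blast
qed

lemma winc_pt: "winc F \<Longrightarrow> inc_chain (\<lambda>n. F n \<sigma>)"
  by (simp add: winc_def inc_chain_def)
lemma wdec_pt: "wdec F \<Longrightarrow> dec_chain (\<lambda>n. F n \<sigma>)"
  by (simp add: wdec_def dec_chain_def)

lemma winc_const: "winc (\<lambda>n. X)" by (simp add: winc_def nle_refl)
lemma wdec_const: "wdec (\<lambda>n. X)" by (simp add: wdec_def nle_refl)
lemma wsup_const: "wsup (\<lambda>n. X) X" unfolding wsup_def using sup_const by blast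
lemma winf_const: "winf (\<lambda>n. X) X" unfolding winf_def using inf_const by blast

lemma winc_iff: "winc F \<longleftrightarrow> (\<forall>n. wt_le (F n) (F (Suc n)))"
  by (simp add: winc_def wt_le_def)
lemma wdec_iff: "wdec F \<longleftrightarrow> (\<forall>n. wt_le (F (Suc n)) (F n))"
  by (simp add: wdec_def wt_le_def)

lemma mono_winc: "wmono T \<Longrightarrow> winc F \<Longrightarrow> winc (\<lambda>n. T (F n))"
  by (simp add: winc_iff wmono_def)
lemma mono_wdec: "wmono T \<Longrightarrow> wdec F \<Longrightarrow> wdec (\<lambda>n. T (F n))"
  by (simp add: wdec_iff wmono_def)

lemma wt_le_refl: "wt_le X X" by (simp add: wt_le_def nle_refl)
lemma wt_le_trans: "wt_le X Y \<Longrightarrow> wt_le Y Z \<Longrightarrow> wt_le X Z"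
  unfolding wt_le_def using nle_trans by blast

lemma wsup_upper: "wsup F S \<Longrightarrow> wt_le (F n) S"
  by (simp add: wsup_def wt_le_def is_sup_range)
lemma winf_lower: "winf F S \<Longrightarrow> wt_le S (F n)"
  by (simp add: winf_def wt_le_def is_inf_range)

lemma jmono_wmono: "jmono H \<Longrightarrow> wmono (H f)"
  unfolding jmono_def wmono_def using wt_le_refl by blast
lemma jcont_wcont: "jcont H \<Longrightarrow> wcont (H f)"
  unfolding jcont_def wcont_def using winc_const wsup_const by blast
lemma jcocont_wcocont: "jcocont H \<Longrightarrow> wcocont (H f)"
  unfolding jcocont_def wcocont_def using wdec_const winf_const by blast



locale obm =
  fixes act :: "'w::monoid_mult \<Rightarrow> 'm::comm_monoid_add \<Rightarrow> 'm"
  assumes ob: "omega_bicontinuous_module act"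
begin

lemma antisym: "nat_le (a::'m) b \<Longrightarrow> nat_le b a \<Longrightarrow> a = b"
  using ob unfolding omega_bicontinuous_module_def by blast

lemma top_ex: "\<exists>t::'m. \<forall>a. nat_le a t"
  using ob unfolding omega_bicontinuous_module_def by blast

definition tp :: 'm where "tp = (SOME t::'m. \<forall>a. nat_le a t)"

lemma le_tp: "nat_le a tp"
  using someI_ex[OF top_ex] unfolding tp_def by blast

lemma sup_ex: "inc_chain (c::nat \<Rightarrow> 'm) \<Longrightarrow> \<exists>s. is_sup (range c) s"
  using ob unfolding omega_bicontinuous_module_def by blast

lemma inf_ex: "dec_chain (c::nat \<Rightarrow> 'm) \<Longrightarrow> \<exists>s. is_inf (range c) s"
  using ob unfolding omega_bicontinuous_module_def by blast

lemma addl: "bicont_map (\<lambda>b. (a::'m) + b)"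
  using ob unfolding omega_bicontinuous_module_def by blast

lemma addr: "bicont_map (\<lambda>b. b + (a::'m))"
  using ob unfolding omega_bicontinuous_module_def by blast

lemma actc: "bicont_map (act w)"
  using ob unfolding omega_bicontinuous_module_def by blast

lemma act_add: "act v (a + b) = act v a + act v b"
  using ob unfolding omega_bicontinuous_module_def is_module_def by blast

lemma act_zero: "act v 0 = 0"
  using ob unfolding omega_bicontinuous_module_def is_module_def by blast

lemma act_mono: "nat_le a b \<Longrightarrow> nat_le (act w a) (act w b)"
  unfolding nat_le_def using act_add by metis

lemma sup_unique: "is_sup S (a::'m) \<Longrightarrow> is_sup S b \<Longrightarrow> a = b"
  unfolding is_sup_def using antisym by blast

lemma inf_unique: "is_inf S (a::'m) \<Longrightarrow> is_inf S b \<Longrightarrow> a = b"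
  unfolding is_inf_def using antisym by blast

lemma sup_map: assumes "bicont_map g" "inc_chain c" "is_sup (range c) s"
  shows "is_sup (range (\<lambda>n. g (c n))) (g s)"
proof -
  have "is_sup (range (g \<circ> c)) (g s)" using assms unfolding bicont_map_def by blast
  thus ?thesis by (simp add: comp_def)
qed

lemma inf_map: assumes "bicont_map g" "dec_chain c" "is_inf (range c) s"
  shows "is_inf (range (\<lambda>n. g (c n))) (g s)"
proof -
  have "is_inf (range (g \<circ> c)) (g s)" using assms unfolding bicont_map_def by blast
  thus ?thesis by (simp add: comp_def)
qed

lemma sup_add:
  assumes a: "inc_chain (a::nat \<Rightarrow> 'm)" and b: "inc_chain b"
    and A: "is_sup (range a) A" and B: "is_sup (range b) B"
  shows "is_sup (range (\<lambda>n. a n + b n)) (A + B)"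
  unfolding is_sup_range
proof safe
  fix n show "nat_le (a n + b n) (A + B)"
    using A B nle_add_mono unfolding is_sup_range by blast
next
  fix u assume u: "\<forall>n. nat_le (a n + b n) u"
  have "nat_le (a m + B) u" for m
  proof -
    have s: "is_sup (range (\<lambda>n. a m + b n)) (a m + B)"
      using sup_map[OF addl b B] .
    have "nat_le (a m + b n) u" for n
    proof -
      have "nat_le (a m + b n) (a (max m n) + b (max m n))"
        by (intro nle_add_mono inc_chain_mono[OF a] inc_chain_mono[OF b]) auto
      thus ?thesis using u nle_trans by blast
    qed
    thus ?thesis using s unfolding is_sup_range by blast
  qed
  moreover have "is_sup (range (\<lambda>m. a m + B)) (A + B)"
    using sup_map[OF addr a A] .
  ultimately show "nat_le (A + B) u" unfolding is_sup_range by blast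
qed

lemma inf_add:
  assumes a: "dec_chain (a::nat \<Rightarrow> 'm)" and b: "dec_chain b"
    and A: "is_inf (range a) A" and B: "is_inf (range b) B"
  shows "is_inf (range (\<lambda>n. a n + b n)) (A + B)"
  unfolding is_inf_range
proof safe
  fix n show "nat_le (A + B) (a n + b n)"
    using A B nle_add_mono unfolding is_inf_range by blast
next
  fix u assume u: "\<forall>n. nat_le u (a n + b n)"
  have "nat_le u (a m + B)" for m
  proof -
    have s: "is_inf (range (\<lambda>n. a m + b n)) (a m + B)"
      using inf_map[OF addl b B] .
    have "nat_le u (a m + b n)" for n
    proof -
      have "nat_le (a (max m n) + b (max m n)) (a m + b n)"
        by (intro nle_add_mono dec_chain_mono[OF a] dec_chain_mono[OF b]) auto
      thus ?thesis using u nle_trans by blast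
    qed
    thus ?thesis using s unfolding is_inf_range by blast
  qed
  moreover have "is_inf (range (\<lambda>m. a m + B)) (A + B)"
    using inf_map[OF addr a A] .
  ultimately show "nat_le u (A + B)" unfolding is_inf_range by blast
qed

lemma wsup_ex: "winc (F::nat \<Rightarrow> ('v,'a,'m) weighting) \<Longrightarrow> \<exists>S. wsup F S"
proof -
  assume "winc F"
  hence "\<forall>\<sigma>. \<exists>s. is_sup (range (\<lambda>n. F n \<sigma>)) s" using sup_ex winc_pt by blast
  thus ?thesis unfolding wsup_def by metis
qed

lemma winf_ex: "wdec (F::nat \<Rightarrow> ('v,'a,'m) weighting) \<Longrightarrow> \<exists>S. winf F S"
proof -
  assume "wdec F"
  hence "\<forall>\<sigma>. \<exists>s. is_inf (range (\<lambda>n. F n \<sigma>)) s" using inf_ex wdec_pt by blast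
  thus ?thesis unfolding winf_def by metis
qed

lemma wsup_unique: "wsup F (S::('v,'a,'m) weighting) \<Longrightarrow> wsup F S' \<Longrightarrow> S = S'"
  unfolding wsup_def using sup_unique by blast

lemma winf_unique: "winf F (S::('v,'a,'m) weighting) \<Longrightarrow> winf F S' \<Longrightarrow> S = S'"
  unfolding winf_def using inf_unique by blast

lemma wt_le_antisym: "wt_le X (Y::('v,'a,'m) weighting) \<Longrightarrow> wt_le Y X \<Longrightarrow> X = Y"
  unfolding wt_le_def using antisym by blast

lemma wsup_least: "wsup F S \<Longrightarrow> (\<And>n. wt_le (F n) U) \<Longrightarrow> wt_le S U"
  unfolding wsup_def wt_le_def is_sup_range by blast

lemma winf_greatest: "winf F S \<Longrightarrow> (\<And>n. wt_le U (F n)) \<Longrightarrow> wt_le U S"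
  unfolding winf_def wt_le_def is_inf_range by blast

lemma lfp_eqI:
  assumes "T X = (X::('v,'a,'m) weighting)" "\<And>Y. T Y = Y \<Longrightarrow> wt_le X Y"
  shows "wt_lfp T = X"
  unfolding wt_lfp_def
proof (rule the_equality)
  show "T X = X \<and> (\<forall>Y. T Y = Y \<longrightarrow> wt_le X Y)" using assms by blast
next
  fix Z assume "T Z = Z \<and> (\<forall>Y. T Y = Y \<longrightarrow> wt_le Z Y)"
  thus "Z = X" using assms wt_le_antisym by blast
qed

lemma gfp_eqI:
  assumes "T X = (X::('v,'a,'m) weighting)" "\<And>Y. T Y = Y \<Longrightarrow> wt_le Y X"
  shows "wt_gfp T = X"
  unfolding wt_gfp_def
proof (rule the_equality)
  show "T X = X \<and> (\<forall>Y. T Y = Y \<longrightarrow> wt_le Y X)" using assms by blast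
next
  fix Z assume "T Z = Z \<and> (\<forall>Y. T Y = Y \<longrightarrow> wt_le Y Z)"
  thus "Z = X" using assms wt_le_antisym by blast
qed

lemma kleene_lfp:
  fixes T :: "('v,'a,'m) weighting \<Rightarrow> ('v,'a,'m) weighting"
  assumes mo: "wmono T" and co: "wcont T"
  shows "winc (\<lambda>n. (T^^n) (\<lambda>_. 0)) \<and> wsup (\<lambda>n. (T^^n) (\<lambda>_. 0)) (wt_lfp T) \<and> T (wt_lfp T) = wt_lfp T"
proof -
  define I where "I = (\<lambda>n. (T^^n) (\<lambda>_. 0::'m))"
  have Isuc: "I (Suc n) = T (I n)" for n by (simp add: I_def)
  have "wt_le (I n) (I (Suc n))" for n
  proof (induction n)
    case 0 show ?case by (simp add: I_def wt_le_def nle_zero)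
  next
    case (Suc n) thus ?case using mo unfolding wmono_def Isuc by blast
  qed
  hence inc: "winc I" by (simp add: winc_iff)
  obtain S where S: "wsup I S" using wsup_ex inc by blast
  have "wsup (\<lambda>n. T (I n)) (T S)" using co inc S by (simp add: wcont_def)
  hence "wsup (\<lambda>n. I (Suc n)) (T S)" by (simp add: Isuc)
  hence "wsup I (T S)" using inc sup_shift winc_pt unfolding wsup_def by blast
  hence fx: "T S = S" using S wsup_unique by blast
  have least: "wt_le S Y" if Y: "T Y = Y" for Y
  proof -
    have "wt_le (I n) Y" for n
    proof (induction n)
      case 0 show ?case by (simp add: I_def wt_le_def nle_zero)
    next
      case (Suc n) thus ?case using mo Y unfolding wmono_def Isuc by metis
    qed
    thus ?thesis using S wsup_least by blast
  qed
  have "wt_lfp T = S" by (rule lfp_eqI) (use fx least in auto)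
  thus ?thesis using inc S fx unfolding I_def by simp
qed

lemma kleene_gfp:
  fixes T :: "('v,'a,'m) weighting \<Rightarrow> ('v,'a,'m) weighting"
  assumes mo: "wmono T" and co: "wcocont T"
  shows "wdec (\<lambda>n. (T^^n) (\<lambda>_. tp)) \<and> winf (\<lambda>n. (T^^n) (\<lambda>_. tp)) (wt_gfp T) \<and> T (wt_gfp T) = wt_gfp T
     \<and> (\<forall>Y. T Y = Y \<longrightarrow> wt_le Y (wt_gfp T))"
proof -
  define I where "I = (\<lambda>n. (T^^n) (\<lambda>_. tp))"
  have Isuc: "I (Suc n) = T (I n)" for n by (simp add: I_def)
  have "wt_le (I (Suc n)) (I n)" for n
  proof (induction n)
    case 0 show ?case by (simp add: I_def wt_le_def le_tp)
  next
    case (Suc n) thus ?case using mo unfolding wmono_def Isuc by blast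
  qed
  hence dec: "wdec I" by (simp add: wdec_iff)
  obtain S where S: "winf I S" using winf_ex dec by blast
  have "winf (\<lambda>n. T (I n)) (T S)" using co dec S by (simp add: wcocont_def)
  hence "winf (\<lambda>n. I (Suc n)) (T S)" by (simp add: Isuc)
  hence "winf I (T S)" using dec inf_shift wdec_pt unfolding winf_def by blast
  hence fx: "T S = S" using S winf_unique by blast
  have greatest: "wt_le Y S" if Y: "T Y = Y" for Y
  proof -
    have "wt_le Y (I n)" for n
    proof (induction n)
      case 0 show ?case by (simp add: I_def wt_le_def le_tp)
    next
      case (Suc n) thus ?case using mo Y unfolding wmono_def Isuc by metis
    qed
    thus ?thesis using S winf_greatest by blast
  qed
  have "wt_gfp T = S" by (rule gfp_eqI) (use fx greatest in auto)
  thus ?thesis using dec S fx greatest unfolding I_def by simp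
qed

end



context obm
begin

lemma lfp_param:
  fixes H :: "('v,'a,'m) weighting \<Rightarrow> ('v,'a,'m) weighting \<Rightarrow> ('v,'a,'m) weighting"
  assumes jm: "jmono H" and jc: "jcont H"
  shows "wmono (\<lambda>f. wt_lfp (H f))" "wcont (\<lambda>f. wt_lfp (H f))"
proof -
  have K: "winc (\<lambda>n. (H f^^n) (\<lambda>_. 0)) \<and> wsup (\<lambda>n. (H f^^n) (\<lambda>_. 0)) (wt_lfp (H f)) \<and> H f (wt_lfp (H f)) = wt_lfp (H f)" for f
    using kleene_lfp[OF jmono_wmono[OF jm] jcont_wcont[OF jc]] .
  have mono: "wt_le (wt_lfp (H f)) (wt_lfp (H g))" if fg: "wt_le f g" for f g
  proof -
    have "wt_le ((H f^^n) (\<lambda>_. 0)) (wt_lfp (H g))" for n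
    proof (induction n)
      case 0 show ?case by (simp add: wt_le_def nle_zero)
    next
      case (Suc n)
      have "wt_le (H f ((H f^^n) (\<lambda>_. 0))) (H g (wt_lfp (H g)))"
        using jm fg Suc unfolding jmono_def by blast
      thus ?case using K[of g] by simp
    qed
    thus ?thesis using K[of f] wsup_least by blast
  qed
  thus "wmono (\<lambda>f. wt_lfp (H f))" unfolding wmono_def by blast
  show "wcont (\<lambda>f. wt_lfp (H f))"
    unfolding wcont_def
  proof (intro allI impI)
    fix F :: "nat \<Rightarrow> ('v,'a,'m) weighting" and S assume F: "winc F" and S: "wsup F S"
    define I where "I = (\<lambda>m n. (H (F m)^^n) (\<lambda>_. 0))"
    define J where "J = (\<lambda>n. (H S^^n) (\<lambda>_. 0))"
    have IJ: "winc (\<lambda>m. I m n) \<and> wsup (\<lambda>m. I m n) (J n)" for n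
    proof (induction n)
      case 0 show ?case by (simp add: I_def J_def winc_const wsup_const)
    next
      case (Suc n)
      have "winc (\<lambda>m. I m (Suc n))"
        using Suc F jm unfolding winc_iff jmono_def I_def by simp
      moreover have "wsup (\<lambda>m. I m (Suc n)) (J (Suc n))"
        using Suc F S jc unfolding jcont_def I_def J_def by simp
      ultimately show ?case ..
    qed
    show "wsup (\<lambda>m. wt_lfp (H (F m))) (wt_lfp (H S))"
      unfolding wsup_def is_sup_range
    proof (intro allI conjI impI)
      fix \<sigma> m
      show "nat_le (wt_lfp (H (F m)) \<sigma>) (wt_lfp (H S) \<sigma>)"
        using mono[OF wsup_upper[OF S]] unfolding wt_le_def by blast
    next
      fix \<sigma> u assume u: "\<forall>m. nat_le (wt_lfp (H (F m)) \<sigma>) u"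
      have "nat_le (J n \<sigma>) u" for n
      proof -
        have "nat_le (I m n \<sigma>) u" for m
          using wsup_upper[OF conjunct1[OF conjunct2[OF K[of "F m"]]], of n] u nle_trans
          unfolding wt_le_def I_def by blast
        thus ?thesis using IJ[of n] unfolding wsup_def is_sup_range by blast
      qed
      thus "nat_le (wt_lfp (H S) \<sigma>) u"
        using conjunct1[OF conjunct2[OF K[of S]]] unfolding wsup_def is_sup_range J_def by blast
    qed
  qed
qed

lemma gfp_param:
  fixes H :: "('v,'a,'m) weighting \<Rightarrow> ('v,'a,'m) weighting \<Rightarrow> ('v,'a,'m) weighting"
  assumes jm: "jmono H" and jc: "jcocont H"
  shows "wmono (\<lambda>f. wt_gfp (H f))" "wcocont (\<lambda>f. wt_gfp (H f))"
proof -
  have K: "wdec (\<lambda>n. (H f^^n) (\<lambda>_. tp)) \<and> winf (\<lambda>n. (H f^^n) (\<lambda>_. tp)) (wt_gfp (H f)) \<and> H f (wt_gfp (H f)) = wt_gfp (H f)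
     \<and> (\<forall>Y. H f Y = Y \<longrightarrow> wt_le Y (wt_gfp (H f)))" for f
    using kleene_gfp[OF jmono_wmono[OF jm] jcocont_wcocont[OF jc]] .
  have mono: "wt_le (wt_gfp (H f)) (wt_gfp (H g))" if fg: "wt_le f g" for f g
  proof -
    have "wt_le (wt_gfp (H f)) ((H g^^n) (\<lambda>_. tp))" for n
    proof (induction n)
      case 0 show ?case by (simp add: wt_le_def le_tp)
    next
      case (Suc n)
      have "wt_le (H f (wt_gfp (H f))) (H g ((H g^^n) (\<lambda>_. tp)))"
        using jm fg Suc unfolding jmono_def by blast
      thus ?case using K[of f] by simp
    qed
    thus ?thesis using K[of g] winf_greatest by blast
  qed
  thus "wmono (\<lambda>f. wt_gfp (H f))" unfolding wmono_def by blast
  show "wcocont (\<lambda>f. wt_gfp (H f))"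
    unfolding wcocont_def
  proof (intro allI impI)
    fix F :: "nat \<Rightarrow> ('v,'a,'m) weighting" and S assume F: "wdec F" and S: "winf F S"
    define I where "I = (\<lambda>m n. (H (F m)^^n) (\<lambda>_. tp))"
    define J where "J = (\<lambda>n. (H S^^n) (\<lambda>_. tp))"
    have IJ: "wdec (\<lambda>m. I m n) \<and> winf (\<lambda>m. I m n) (J n)" for n
    proof (induction n)
      case 0 show ?case by (simp add: I_def J_def wdec_const winf_const)
    next
      case (Suc n)
      have "wdec (\<lambda>m. I m (Suc n))"
        using Suc F jm unfolding wdec_iff jmono_def I_def by simp
      moreover have "winf (\<lambda>m. I m (Suc n)) (J (Suc n))"
        using Suc F S jc unfolding jcocont_def I_def J_def by simp
      ultimately show ?case ..
    qed
    show "winf (\<lambda>m. wt_gfp (H (F m))) (wt_gfp (H S))"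
      unfolding winf_def is_inf_range
    proof (intro allI conjI impI)
      fix \<sigma> m
      show "nat_le (wt_gfp (H S) \<sigma>) (wt_gfp (H (F m)) \<sigma>)"
        using mono[OF winf_lower[OF S]] unfolding wt_le_def by blast
    next
      fix \<sigma> u assume u: "\<forall>m. nat_le u (wt_gfp (H (F m)) \<sigma>)"
      have "nat_le u (J n \<sigma>)" for n
      proof -
        have "nat_le u (I m n \<sigma>)" for m
          using winf_lower[OF conjunct1[OF conjunct2[OF K[of "F m"]]], of n] u nle_trans
          unfolding wt_le_def I_def by blast
        thus ?thesis using IJ[of n] unfolding winf_def is_inf_range by blast
      qed
      thus "nat_le u (wt_gfp (H S) \<sigma>)"
        using conjunct1[OF conjunct2[OF K[of S]]] unfolding winf_def is_inf_range J_def by blast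
    qed
  qed
qed

end



context obm
begin

definition good :: "('w, 'v, 'a) wgcl \<Rightarrow> bool" where
  "good C \<longleftrightarrow> wmono (wp act C) \<and> wcont (wp act C) \<and> wadd (wp act C) \<and> wcocont (wlp act C)
     \<and> (\<forall>f. wlp act C f = (\<lambda>\<sigma>. wp act C f \<sigma> + wlp act C (\<lambda>_. 0) \<sigma>))"

lemma good_wlp_mono: fixes C :: "('w,'v,'a) wgcl" assumes "good C" shows "wmono (wlp act C)"
proof -
  have e: "\<And>f. wlp act C f = (\<lambda>\<sigma>. wp act C f \<sigma> + wlp act C (\<lambda>_. 0) \<sigma>)"
    and m: "wmono (wp act C)" using assms unfolding good_def by blast+
  show ?thesis unfolding wmono_def
  proof (intro allI impI)
    fix X Y :: "('v,'a,'m) weighting" assume "wt_le X Y"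
    hence "wt_le (wp act C X) (wp act C Y)" using m unfolding wmono_def by blast
    thus "wt_le (wlp act C X) (wlp act C Y)"
      by (subst (1 2) e) (simp add: wt_le_def nle_add_mono nle_refl)
  qed
qed

lemma good_Assign: "good (Assign x E :: ('w,'v,'a) wgcl)"
  unfolding good_def wmono_def wcont_def wadd_def wcocont_def wt_le_def wsup_def winf_def
  by auto

lemma good_Weight: "good (Weight w :: ('w,'v,'a) wgcl)"
proof -
  have "wmono (wp act (Weight w :: ('w,'v,'a) wgcl))"
    by (simp add: wmono_def wt_le_def act_mono)
  moreover have "wcont (wp act (Weight w :: ('w,'v,'a) wgcl))"
    unfolding wcont_def wsup_def
  proof (intro allI impI)
    fix F :: "nat \<Rightarrow> ('v,'a,'m) weighting" and S \<sigma>
    assume F: "winc F" and S: "\<forall>\<sigma>. is_sup (range (\<lambda>n. F n \<sigma>)) (S \<sigma>)"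
    have "is_sup (range (\<lambda>n. act w (F n \<sigma>))) (act w (S \<sigma>))"
      using sup_map[OF actc winc_pt[OF F] spec[OF S]] .
    thus "is_sup (range (\<lambda>n. wp act (Weight w) (F n) \<sigma>)) (wp act (Weight w) S \<sigma>)" by simp
  qed
  moreover have "wcocont (wlp act (Weight w :: ('w,'v,'a) wgcl))"
    unfolding wcocont_def winf_def
  proof (intro allI impI)
    fix F :: "nat \<Rightarrow> ('v,'a,'m) weighting" and S \<sigma>
    assume F: "wdec F" and S: "\<forall>\<sigma>. is_inf (range (\<lambda>n. F n \<sigma>)) (S \<sigma>)"
    have "is_inf (range (\<lambda>n. act w (F n \<sigma>))) (act w (S \<sigma>))"
      using inf_map[OF actc wdec_pt[OF F] spec[OF S]] .
    thus "is_inf (range (\<lambda>n. wlp act (Weight w) (F n) \<sigma>)) (wlp act (Weight w) S \<sigma>)" by simp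
  qed
  moreover have "wadd (wp act (Weight w :: ('w,'v,'a) wgcl))" by (simp add: wadd_def act_add)
  ultimately show ?thesis unfolding good_def by (simp add: act_zero)
qed

lemma good_If: fixes C1 C2 :: "('w,'v,'a) wgcl" assumes g1: "good C1" and g2: "good C2" shows "good (If \<phi> C1 C2)"
proof -
  have m1: "wmono (wp act C1)" and c1: "wcont (wp act C1)" and a1: "wadd (wp act C1)"
    and cc1: "wcocont (wlp act C1)" and e1: "\<And>f. wlp act C1 f = (\<lambda>\<sigma>. wp act C1 f \<sigma> + wlp act C1 (\<lambda>_. 0) \<sigma>)"
    using g1 unfolding good_def by blast+
  have m2: "wmono (wp act C2)" and c2: "wcont (wp act C2)" and a2: "wadd (wp act C2)"
    and cc2: "wcocont (wlp act C2)" and e2: "\<And>f. wlp act C2 f = (\<lambda>\<sigma>. wp act C2 f \<sigma> + wlp act C2 (\<lambda>_. 0) \<sigma>)"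
    using g2 unfolding good_def by blast+
  have wpI: "wp act (If \<phi> C1 C2) f = (\<lambda>\<sigma>. if \<phi> \<sigma> then wp act C1 f \<sigma> else wp act C2 f \<sigma>)" for f
    by (simp add: guard_sel)
  have wlpI: "wlp act (If \<phi> C1 C2) f = (\<lambda>\<sigma>. if \<phi> \<sigma> then wlp act C1 f \<sigma> else wlp act C2 f \<sigma>)" for f
    by (simp add: guard_sel)
  have "wmono (wp act (If \<phi> C1 C2))"
    unfolding wmono_def wpI
  proof (intro allI impI)
    fix X Y :: "('v,'a,'m) weighting" assume "wt_le X Y"
    hence "wt_le (wp act C1 X) (wp act C1 Y)" "wt_le (wp act C2 X) (wp act C2 Y)"
      using m1 m2 unfolding wmono_def by blast+
    thus "wt_le (\<lambda>\<sigma>. if \<phi> \<sigma> then wp act C1 X \<sigma> else wp act C2 X \<sigma>) (\<lambda>\<sigma>. if \<phi> \<sigma> then wp act C1 Y \<sigma> else wp act C2 Y \<sigma>)"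
      unfolding wt_le_def by simp
  qed
  moreover have "wcont (wp act (If \<phi> C1 C2))"
    unfolding wcont_def wpI
  proof (intro allI impI)
    fix F :: "nat \<Rightarrow> ('v,'a,'m) weighting" and S assume F: "winc F" and S: "wsup F S"
    have s1: "wsup (\<lambda>n. wp act C1 (F n)) (wp act C1 S)" and s2: "wsup (\<lambda>n. wp act C2 (F n)) (wp act C2 S)"
      using c1 c2 F S unfolding wcont_def by blast+
    show "wsup (\<lambda>n \<sigma>. if \<phi> \<sigma> then wp act C1 (F n) \<sigma> else wp act C2 (F n) \<sigma>) (\<lambda>\<sigma>. if \<phi> \<sigma> then wp act C1 S \<sigma> else wp act C2 S \<sigma>)"
      unfolding wsup_def
    proof
      fix \<sigma> show "is_sup (range (\<lambda>n. if \<phi> \<sigma> then wp act C1 (F n) \<sigma> else wp act C2 (F n) \<sigma>)) (if \<phi> \<sigma> then wp act C1 S \<sigma> else wp act C2 S \<sigma>)"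
        using s1 s2 unfolding wsup_def by (cases "\<phi> \<sigma>") simp_all
    qed
  qed
  moreover have "wcocont (wlp act (If \<phi> C1 C2))"
    unfolding wcocont_def wlpI
  proof (intro allI impI)
    fix F :: "nat \<Rightarrow> ('v,'a,'m) weighting" and S assume F: "wdec F" and S: "winf F S"
    have s1: "winf (\<lambda>n. wlp act C1 (F n)) (wlp act C1 S)" and s2: "winf (\<lambda>n. wlp act C2 (F n)) (wlp act C2 S)"
      using cc1 cc2 F S unfolding wcocont_def by blast+
    show "winf (\<lambda>n \<sigma>. if \<phi> \<sigma> then wlp act C1 (F n) \<sigma> else wlp act C2 (F n) \<sigma>) (\<lambda>\<sigma>. if \<phi> \<sigma> then wlp act C1 S \<sigma> else wlp act C2 S \<sigma>)"
      unfolding winf_def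
    proof
      fix \<sigma> show "is_inf (range (\<lambda>n. if \<phi> \<sigma> then wlp act C1 (F n) \<sigma> else wlp act C2 (F n) \<sigma>)) (if \<phi> \<sigma> then wlp act C1 S \<sigma> else wlp act C2 S \<sigma>)"
        using s1 s2 unfolding winf_def by (cases "\<phi> \<sigma>") simp_all
    qed
  qed
  moreover have "wadd (wp act (If \<phi> C1 C2))"
    unfolding wadd_def wpI
  proof (intro allI)
    fix X Y :: "('v,'a,'m) weighting"
    show "(\<lambda>\<sigma>. if \<phi> \<sigma> then wp act C1 (\<lambda>\<sigma>. X \<sigma> + Y \<sigma>) \<sigma> else wp act C2 (\<lambda>\<sigma>. X \<sigma> + Y \<sigma>) \<sigma>) =
      (\<lambda>\<sigma>. (if \<phi> \<sigma> then wp act C1 X \<sigma> else wp act C2 X \<sigma>) + (if \<phi> \<sigma> then wp act C1 Y \<sigma> else wp act C2 Y \<sigma>))"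
      using a1 a2 unfolding wadd_def by (simp add: fun_eq_iff)
  qed
  moreover have "wlp act (If \<phi> C1 C2) f = (\<lambda>\<sigma>. wp act (If \<phi> C1 C2) f \<sigma> + wlp act (If \<phi> C1 C2) (\<lambda>_. 0) \<sigma>)" for f
    unfolding wpI wlpI by (simp add: fun_eq_iff e1[of f] e2[of f])
  ultimately show ?thesis unfolding good_def by blast
qed

lemma good_Branch: fixes C1 C2 :: "('w,'v,'a) wgcl" assumes g1: "good C1" and g2: "good C2" shows "good (Branch C1 C2)"
proof -
  have m1: "wmono (wp act C1)" and c1: "wcont (wp act C1)" and a1: "wadd (wp act C1)"
    and cc1: "wcocont (wlp act C1)" and e1: "\<And>f. wlp act C1 f = (\<lambda>\<sigma>. wp act C1 f \<sigma> + wlp act C1 (\<lambda>_. 0) \<sigma>)"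
    using g1 unfolding good_def by blast+
  have m2: "wmono (wp act C2)" and c2: "wcont (wp act C2)" and a2: "wadd (wp act C2)"
    and cc2: "wcocont (wlp act C2)" and e2: "\<And>f. wlp act C2 f = (\<lambda>\<sigma>. wp act C2 f \<sigma> + wlp act C2 (\<lambda>_. 0) \<sigma>)"
    using g2 unfolding good_def by blast+
  have lm1: "wmono (wlp act C1)" and lm2: "wmono (wlp act C2)" using good_wlp_mono g1 g2 by blast+
  have "wmono (wp act (Branch C1 C2))"
    using m1 m2 by (simp add: wmono_def wt_le_def nle_add_mono)
  moreover have "wcont (wp act (Branch C1 C2))"
    unfolding wcont_def
  proof (intro allI impI)
    fix F :: "nat \<Rightarrow> ('v,'a,'m) weighting" and S assume F: "winc F" and S: "wsup F S"
    have i1: "winc (\<lambda>n. wp act C1 (F n))" and i2: "winc (\<lambda>n. wp act C2 (F n))"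
      using mono_winc m1 m2 F by blast+
    have s1: "wsup (\<lambda>n. wp act C1 (F n)) (wp act C1 S)" and s2: "wsup (\<lambda>n. wp act C2 (F n)) (wp act C2 S)"
      using c1 c2 F S unfolding wcont_def by blast+
    show "wsup (\<lambda>n. wp act (Branch C1 C2) (F n)) (wp act (Branch C1 C2) S)"
      using sup_add[OF winc_pt[OF i1] winc_pt[OF i2]] s1 s2 unfolding wsup_def by simp
  qed
  moreover have "wcocont (wlp act (Branch C1 C2))"
    unfolding wcocont_def
  proof (intro allI impI)
    fix F :: "nat \<Rightarrow> ('v,'a,'m) weighting" and S assume F: "wdec F" and S: "winf F S"
    have i1: "wdec (\<lambda>n. wlp act C1 (F n))" and i2: "wdec (\<lambda>n. wlp act C2 (F n))"
      using mono_wdec lm1 lm2 F by blast+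
    have s1: "winf (\<lambda>n. wlp act C1 (F n)) (wlp act C1 S)" and s2: "winf (\<lambda>n. wlp act C2 (F n)) (wlp act C2 S)"
      using cc1 cc2 F S unfolding wcocont_def by blast+
    show "winf (\<lambda>n. wlp act (Branch C1 C2) (F n)) (wlp act (Branch C1 C2) S)"
      using inf_add[OF wdec_pt[OF i1] wdec_pt[OF i2]] s1 s2 unfolding winf_def by simp
  qed
  moreover have "wadd (wp act (Branch C1 C2))"
    using a1 a2 unfolding wadd_def by (simp add: ac_simps)
  moreover have "wlp act (Branch C1 C2) f = (\<lambda>\<sigma>. wp act (Branch C1 C2) f \<sigma> + wlp act (Branch C1 C2) (\<lambda>_. 0) \<sigma>)" for f
    by (simp add: e1[of f] e2[of f] ac_simps)
  ultimately show ?thesis unfolding good_def by blast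
qed

lemma good_Seq: fixes C1 C2 :: "('w,'v,'a) wgcl" assumes g1: "good C1" and g2: "good C2" shows "good (Seq C1 C2)"
proof -
  have m1: "wmono (wp act C1)" and c1: "wcont (wp act C1)" and a1: "wadd (wp act C1)"
    and cc1: "wcocont (wlp act C1)" and e1: "\<And>f. wlp act C1 f = (\<lambda>\<sigma>. wp act C1 f \<sigma> + wlp act C1 (\<lambda>_. 0) \<sigma>)"
    using g1 unfolding good_def by blast+
  have m2: "wmono (wp act C2)" and c2: "wcont (wp act C2)" and a2: "wadd (wp act C2)"
    and cc2: "wcocont (wlp act C2)" and e2: "\<And>f. wlp act C2 f = (\<lambda>\<sigma>. wp act C2 f \<sigma> + wlp act C2 (\<lambda>_. 0) \<sigma>)"
    using g2 unfolding good_def by blast+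
  have lm2: "wmono (wlp act C2)" using good_wlp_mono g2 by blast
  have "wmono (wp act (Seq C1 C2))"
    using m1 m2 by (simp add: wmono_def)
  moreover have "wcont (wp act (Seq C1 C2))"
    unfolding wcont_def
  proof (intro allI impI)
    fix F :: "nat \<Rightarrow> ('v,'a,'m) weighting" and S assume F: "winc F" and S: "wsup F S"
    have "winc (\<lambda>n. wp act C2 (F n))" using mono_winc[OF m2 F] .
    moreover have "wsup (\<lambda>n. wp act C2 (F n)) (wp act C2 S)" using c2 F S unfolding wcont_def by blast
    ultimately have "wsup (\<lambda>n. wp act C1 (wp act C2 (F n))) (wp act C1 (wp act C2 S))"
      using c1 unfolding wcont_def by blast
    thus "wsup (\<lambda>n. wp act (Seq C1 C2) (F n)) (wp act (Seq C1 C2) S)" by simp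
  qed
  moreover have "wcocont (wlp act (Seq C1 C2))"
    unfolding wcocont_def
  proof (intro allI impI)
    fix F :: "nat \<Rightarrow> ('v,'a,'m) weighting" and S assume F: "wdec F" and S: "winf F S"
    have "wdec (\<lambda>n. wlp act C2 (F n))" using mono_wdec[OF lm2 F] .
    moreover have "winf (\<lambda>n. wlp act C2 (F n)) (wlp act C2 S)" using cc2 F S unfolding wcocont_def by blast
    ultimately have "winf (\<lambda>n. wlp act C1 (wlp act C2 (F n))) (wlp act C1 (wlp act C2 S))"
      using cc1 unfolding wcocont_def by blast
    thus "winf (\<lambda>n. wlp act (Seq C1 C2) (F n)) (wlp act (Seq C1 C2) S)" by simp
  qed
  moreover have "wadd (wp act (Seq C1 C2))"
    using a1 a2 unfolding wadd_def by simp
  moreover have "wlp act (Seq C1 C2) f = (\<lambda>\<sigma>. wp act (Seq C1 C2) f \<sigma> + wlp act (Seq C1 C2) (\<lambda>_. 0) \<sigma>)" for f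
  proof -
    have "wlp act (Seq C1 C2) f = wlp act C1 (\<lambda>\<sigma>. wp act C2 f \<sigma> + wlp act C2 (\<lambda>_. 0) \<sigma>)"
      by (simp add: e2[of f])
    also have "\<dots> = (\<lambda>\<sigma>. wp act C1 (\<lambda>\<sigma>. wp act C2 f \<sigma> + wlp act C2 (\<lambda>_. 0) \<sigma>) \<sigma> + wlp act C1 (\<lambda>_. 0) \<sigma>)"
      by (rule e1)
    also have "\<dots> = (\<lambda>\<sigma>. wp act C1 (wp act C2 f) \<sigma> + (wp act C1 (wlp act C2 (\<lambda>_. 0)) \<sigma> + wlp act C1 (\<lambda>_. 0) \<sigma>))"
      using a1 unfolding wadd_def by (simp add: ac_simps)
    also have "\<dots> = (\<lambda>\<sigma>. wp act (Seq C1 C2) f \<sigma> + wlp act (Seq C1 C2) (\<lambda>_. 0) \<sigma>)"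
      by (simp add: e1[of "wlp act C2 (\<lambda>_. 0)"])
    finally show ?thesis .
  qed
  ultimately show ?thesis unfolding good_def by blast
qed

end



context obm
begin

definition Hp :: "('w,'v,'a) wgcl \<Rightarrow> (('v,'a) state \<Rightarrow> bool) \<Rightarrow> ('v,'a,'m) weighting \<Rightarrow> ('v,'a,'m) weighting \<Rightarrow> ('v,'a,'m) weighting" where
  "Hp C \<phi> = (\<lambda>f X \<sigma>. if \<phi> \<sigma> then wp act C X \<sigma> else f \<sigma>)"

definition Hl :: "('w,'v,'a) wgcl \<Rightarrow> (('v,'a) state \<Rightarrow> bool) \<Rightarrow> ('v,'a,'m) weighting \<Rightarrow> ('v,'a,'m) weighting \<Rightarrow> ('v,'a,'m) weighting" where
  "Hl C \<phi> = (\<lambda>f X \<sigma>. if \<phi> \<sigma> then wlp act C X \<sigma> else f \<sigma>)"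

lemma wp_While': "wp act (While \<phi> C) f = wt_lfp (Hp C \<phi> f)"
  by (simp add: Hp_def guard_sel2)

lemma wlp_While': "wlp act (While \<phi> C) f = wt_gfp (Hl C \<phi> f)"
  by (simp add: Hl_def guard_sel2)

lemma good_While: fixes C :: "('w,'v,'a) wgcl" assumes g: "good C" shows "good (While \<phi> C)"
proof -
  have m: "wmono (wp act C)" and c: "wcont (wp act C)" and a: "wadd (wp act C)"
    and cc: "wcocont (wlp act C)" and e: "\<And>f. wlp act C f = (\<lambda>\<sigma>. wp act C f \<sigma> + wlp act C (\<lambda>_. 0) \<sigma>)"
    using g unfolding good_def by blast+
  have lm: "wmono (wlp act C)" using good_wlp_mono g by blast
  have jmp: "jmono (Hp C \<phi>)"
    unfolding jmono_def
  proof (intro allI impI)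
    fix f g X Y :: "('v,'a,'m) weighting" assume fg: "wt_le f g" and XY: "wt_le X Y"
    have "wt_le (wp act C X) (wp act C Y)" using m XY unfolding wmono_def by blast
    thus "wt_le (Hp C \<phi> f X) (Hp C \<phi> g Y)" using fg unfolding wt_le_def Hp_def by simp
  qed
  have jml: "jmono (Hl C \<phi>)"
    unfolding jmono_def
  proof (intro allI impI)
    fix f g X Y :: "('v,'a,'m) weighting" assume fg: "wt_le f g" and XY: "wt_le X Y"
    have "wt_le (wlp act C X) (wlp act C Y)" using lm XY unfolding wmono_def by blast
    thus "wt_le (Hl C \<phi> f X) (Hl C \<phi> g Y)" using fg unfolding wt_le_def Hl_def by simp
  qed
  have jcp: "jcont (Hp C \<phi>)"
    unfolding jcont_def
  proof (intro allI impI)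
    fix F X :: "nat \<Rightarrow> ('v,'a,'m) weighting" and Fs Xs :: "('v,'a,'m) weighting" assume F: "winc F" and Fs: "wsup F Fs" and X: "winc X" and Xs: "wsup X Xs"
    have s: "wsup (\<lambda>n. wp act C (X n)) (wp act C Xs)" using c X Xs unfolding wcont_def by blast
    show "wsup (\<lambda>n. Hp C \<phi> (F n) (X n)) (Hp C \<phi> Fs Xs)"
      unfolding wsup_def
    proof
      fix \<sigma> show "is_sup (range (\<lambda>n. Hp C \<phi> (F n) (X n) \<sigma>)) (Hp C \<phi> Fs Xs \<sigma>)"
        using s Fs unfolding wsup_def Hp_def by (cases "\<phi> \<sigma>") simp_all
    qed
  qed
  have jcl: "jcocont (Hl C \<phi>)"
    unfolding jcocont_def
  proof (intro allI impI)
    fix F X :: "nat \<Rightarrow> ('v,'a,'m) weighting" and Fs Xs :: "('v,'a,'m) weighting" assume F: "wdec F" and Fs: "winf F Fs" and X: "wdec X" and Xs: "winf X Xs"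
    have s: "winf (\<lambda>n. wlp act C (X n)) (wlp act C Xs)" using cc X Xs unfolding wcocont_def by blast
    show "winf (\<lambda>n. Hl C \<phi> (F n) (X n)) (Hl C \<phi> Fs Xs)"
      unfolding winf_def
    proof
      fix \<sigma> show "is_inf (range (\<lambda>n. Hl C \<phi> (F n) (X n) \<sigma>)) (Hl C \<phi> Fs Xs \<sigma>)"
        using s Fs unfolding winf_def Hl_def by (cases "\<phi> \<sigma>") simp_all
    qed
  qed
  have wpW: "wp act (While \<phi> C) = (\<lambda>f. wt_lfp (Hp C \<phi> f))" by (rule ext) (rule wp_While')
  have wlpW: "wlp act (While \<phi> C) = (\<lambda>f. wt_gfp (Hl C \<phi> f))" by (rule ext) (rule wlp_While')
  have K: "winc (\<lambda>n. (Hp C \<phi> h^^n) (\<lambda>_. 0)) \<and> wsup (\<lambda>n. (Hp C \<phi> h^^n) (\<lambda>_. 0)) (wt_lfp (Hp C \<phi> h))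
      \<and> Hp C \<phi> h (wt_lfp (Hp C \<phi> h)) = wt_lfp (Hp C \<phi> h)" for h
    using kleene_lfp[OF jmono_wmono[OF jmp] jcont_wcont[OF jcp]] .
  have M1: "wmono (wp act (While \<phi> C))" unfolding wpW using lfp_param[OF jmp jcp] by blast
  have M2: "wcont (wp act (While \<phi> C))" unfolding wpW using lfp_param[OF jmp jcp] by blast
  have M3: "wcocont (wlp act (While \<phi> C))" unfolding wlpW using gfp_param[OF jml jcl] by blast
  have M4: "wadd (wp act (While \<phi> C))"
    unfolding wadd_def wpW
  proof (intro allI)
    fix X Y :: "('v,'a,'m) weighting"
    have it: "(Hp C \<phi> (\<lambda>\<sigma>. X \<sigma> + Y \<sigma>)^^n) (\<lambda>_. 0) = (\<lambda>\<sigma>. (Hp C \<phi> X^^n) (\<lambda>_. 0) \<sigma> + (Hp C \<phi> Y^^n) (\<lambda>_. 0) \<sigma>)" for n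
    proof (induction n)
      case 0 show ?case by simp
    next
      case (Suc n)
      have gen: "Hp C \<phi> (\<lambda>\<sigma>. X \<sigma> + Y \<sigma>) (\<lambda>\<sigma>. A \<sigma> + B \<sigma>) = (\<lambda>\<sigma>. Hp C \<phi> X A \<sigma> + Hp C \<phi> Y B \<sigma>)" for A B
        using a unfolding wadd_def Hp_def by (simp add: fun_eq_iff)
      show ?case by (simp only: funpow.simps comp_def Suc gen)
    qed
    have "wsup (\<lambda>n \<sigma>. (Hp C \<phi> X^^n) (\<lambda>_. 0) \<sigma> + (Hp C \<phi> Y^^n) (\<lambda>_. 0) \<sigma>) (\<lambda>\<sigma>. wt_lfp (Hp C \<phi> X) \<sigma> + wt_lfp (Hp C \<phi> Y) \<sigma>)"
      unfolding wsup_def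
    proof
      fix \<sigma>
      show "is_sup (range (\<lambda>n. (Hp C \<phi> X^^n) (\<lambda>_. 0) \<sigma> + (Hp C \<phi> Y^^n) (\<lambda>_. 0) \<sigma>)) (wt_lfp (Hp C \<phi> X) \<sigma> + wt_lfp (Hp C \<phi> Y) \<sigma>)"
        using sup_add[OF winc_pt[OF conjunct1[OF K[of X]]] winc_pt[OF conjunct1[OF K[of Y]]]]
          conjunct1[OF conjunct2[OF K[of X]]] conjunct1[OF conjunct2[OF K[of Y]]]
        unfolding wsup_def by blast
    qed
    moreover have "wsup (\<lambda>n \<sigma>. (Hp C \<phi> X^^n) (\<lambda>_. 0) \<sigma> + (Hp C \<phi> Y^^n) (\<lambda>_. 0) \<sigma>) (wt_lfp (Hp C \<phi> (\<lambda>\<sigma>. X \<sigma> + Y \<sigma>)))"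
      using conjunct1[OF conjunct2[OF K[of "\<lambda>\<sigma>. X \<sigma> + Y \<sigma>"]]] unfolding it .
    ultimately show "wt_lfp (Hp C \<phi> (\<lambda>\<sigma>. X \<sigma> + Y \<sigma>)) = (\<lambda>\<sigma>. wt_lfp (Hp C \<phi> X) \<sigma> + wt_lfp (Hp C \<phi> Y) \<sigma>)"
      using wsup_unique by blast
  qed
  have M5: "wlp act (While \<phi> C) f = (\<lambda>\<sigma>. wp act (While \<phi> C) f \<sigma> + wlp act (While \<phi> C) (\<lambda>_. 0) \<sigma>)" for f
  proof -
    define L where "L = wt_lfp (Hp C \<phi> f)"
    define G where "G = wt_gfp (Hl C \<phi> (\<lambda>_. 0))"
    define D where "D = (\<lambda>n. (Hl C \<phi> (\<lambda>_. 0)^^n) (\<lambda>_. tp))"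
    have KG: "wdec D \<and> winf D G \<and> Hl C \<phi> (\<lambda>_. 0) G = G"
      using kleene_gfp[OF jmono_wmono[OF jml] jcocont_wcocont[OF jcl]] unfolding D_def G_def by blast
    have Lpt: "L \<sigma> = (if \<phi> \<sigma> then wp act C L \<sigma> else f \<sigma>)" for \<sigma>
      using fun_cong[OF conjunct2[OF conjunct2[OF K[of f]]], of \<sigma>] unfolding L_def Hp_def by simp
    have Gpt: "G \<sigma> = (if \<phi> \<sigma> then wlp act C G \<sigma> else 0)" for \<sigma>
      using fun_cong[OF conjunct2[OF conjunct2[OF KG]], of \<sigma>] unfolding Hl_def by simp
    have step: "Hl C \<phi> f (\<lambda>\<sigma>. L \<sigma> + Z \<sigma>) = (\<lambda>\<sigma>. L \<sigma> + Hl C \<phi> (\<lambda>_. 0) Z \<sigma>)" for Z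
    proof (rule ext)
      fix \<sigma>
      show "Hl C \<phi> f (\<lambda>\<sigma>. L \<sigma> + Z \<sigma>) \<sigma> = L \<sigma> + Hl C \<phi> (\<lambda>_. 0) Z \<sigma>"
      proof (cases "\<phi> \<sigma>")
        case True
        have "Hl C \<phi> f (\<lambda>\<sigma>. L \<sigma> + Z \<sigma>) \<sigma> = wp act C (\<lambda>\<sigma>. L \<sigma> + Z \<sigma>) \<sigma> + wlp act C (\<lambda>_. 0) \<sigma>"
          using True unfolding Hl_def by (simp add: e[of "\<lambda>\<sigma>. L \<sigma> + Z \<sigma>"])
        also have "\<dots> = wp act C L \<sigma> + (wp act C Z \<sigma> + wlp act C (\<lambda>_. 0) \<sigma>)"
          using a unfolding wadd_def by (simp add: ac_simps)
        also have "\<dots> = L \<sigma> + Hl C \<phi> (\<lambda>_. 0) Z \<sigma>"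
          using True Lpt[of \<sigma>] unfolding Hl_def by (simp add: e[of Z])
        finally show ?thesis .
      next
        case False
        thus ?thesis using Lpt[of \<sigma>] unfolding Hl_def by simp
      qed
    qed
    have "wt_gfp (Hl C \<phi> f) = (\<lambda>\<sigma>. L \<sigma> + G \<sigma>)"
    proof (rule gfp_eqI)
      have "Hl C \<phi> f (\<lambda>\<sigma>. L \<sigma> + G \<sigma>) = (\<lambda>\<sigma>. L \<sigma> + Hl C \<phi> (\<lambda>_. 0) G \<sigma>)" by (rule step)
      thus "Hl C \<phi> f (\<lambda>\<sigma>. L \<sigma> + G \<sigma>) = (\<lambda>\<sigma>. L \<sigma> + G \<sigma>)" using KG by simp
    next
      fix Y assume Y: "Hl C \<phi> f Y = Y"
      have le: "wt_le Y (\<lambda>\<sigma>. L \<sigma> + D n \<sigma>)" for n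
      proof (induction n)
        case 0 show ?case unfolding D_def wt_le_def using le_tp nle_add2 nle_trans by simp blast
      next
        case (Suc n)
        have "wt_le (Hl C \<phi> f Y) (Hl C \<phi> f (\<lambda>\<sigma>. L \<sigma> + D n \<sigma>))"
          using jml Suc wt_le_refl unfolding jmono_def by blast
        thus ?case using Y unfolding step by (simp add: D_def)
      qed
      show "wt_le Y (\<lambda>\<sigma>. L \<sigma> + G \<sigma>)"
        unfolding wt_le_def
      proof
        fix \<sigma>
        have "is_inf (range (\<lambda>n. L \<sigma> + D n \<sigma>)) (L \<sigma> + G \<sigma>)"
          using inf_map[OF addl wdec_pt[OF conjunct1[OF KG]]] conjunct1[OF conjunct2[OF KG]]
          unfolding winf_def by blast
        thus "nat_le (Y \<sigma>) (L \<sigma> + G \<sigma>)" using le unfolding wt_le_def is_inf_range by blast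
      qed
    qed
    thus ?thesis unfolding wp_While' wlp_While' L_def G_def .
  qed
  show ?thesis unfolding good_def using M1 M2 M3 M4 M5 by blast
qed

lemma good_all: "good C"
  by (induction C) (auto intro: good_Assign good_Seq good_If good_Branch good_Weight good_While)

end


theorem mainTheorem5:
  fixes act :: "'w::monoid_mult \<Rightarrow> 'm::comm_monoid_add \<Rightarrow> 'm"
    and C :: "('w, 'v, 'a) wgcl"
    and f :: "('v, 'a, 'm) weighting"
  assumes "omega_bicontinuous_module act"
  shows "wlp act C f = (\<lambda>\<sigma>. wp act C f \<sigma> + wlp act C (\<lambda>_. 0) \<sigma>)"
proof -
  interpret obm act by (rule obm.intro) (rule assms)
  show ?thesis using good_all[of C] unfolding good_def by blast
qed

end
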